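(* Let $\mathbf{x}$ be a $d$-dimensional random vector that is a mixture of two $\sigma$-sub-gaussian random vectors $\mathbf{x}_1,\mathbf{x}_2$ with overlapping supports and mixture proportion $\alpha\in[0,1]$, i.e. its density is $p(\mathbf{x})=\alpha p_1(\mathbf{x})+(1-\alpha)p_2(\mathbf{x})$. Let $\boldsymbol{v}$ satisfy $\|\boldsymbol{v}\|_2=1$ and suppose the Jensen–Shannon divergence satisfies $\mathrm{JS}(\boldsymbol{v}^\top\mathbf{x}_1\,\|\,\boldsymbol{v}^\top\mathbf{x}_2)\le\beta$. Then the differential entropy $H(\boldsymbol{v}^\top\mathbf{x})$ is at most $\mathcal{O}(\log\sigma+\beta)$. *)

theory Defs
  imports "HOL-Probability.Probability"
begin

text \<open>Lebesgue measure on R^d, points represented as functions nat => real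
  (coordinates 0..d-1; extensional, i.e. undefined outside).\<close>
abbreviation lebesgue_Rd :: "nat \<Rightarrow> (nat \<Rightarrow> real) measure" where
  "lebesgue_Rd d \<equiv> Pi\<^sub>M {..<d} (\<lambda>_. lborel)"

definition inner_Rd :: "nat \<Rightarrow> (nat \<Rightarrow> real) \<Rightarrow> (nat \<Rightarrow> real) \<Rightarrow> real" where
  "inner_Rd d u x = (\<Sum>i<d. u i * x i)"

definition norm_Rd :: "nat \<Rightarrow> (nat \<Rightarrow> real) \<Rightarrow> real" where
  "norm_Rd d u = sqrt (\<Sum>i<d. (u i)\<^sup>2)"

definition is_density_Rd :: "nat \<Rightarrow> ((nat \<Rightarrow> real) \<Rightarrow> real) \<Rightarrow> bool" where
  "is_density_Rd d p \<longleftrightarrow> p \<in> borel_measurable (lebesgue_Rd d) \<and>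
     (\<forall>x\<in>space (lebesgue_Rd d). 0 \<le> p x) \<and>
     integrable (lebesgue_Rd d) p \<and> (\<integral>x. p x \<partial>lebesgue_Rd d) = 1"

definition law_Rd :: "nat \<Rightarrow> ((nat \<Rightarrow> real) \<Rightarrow> real) \<Rightarrow> (nat \<Rightarrow> real) measure" where
  "law_Rd d p = density (lebesgue_Rd d) (\<lambda>x. ennreal (p x))"

definition subgaussian_Rd :: "nat \<Rightarrow> real \<Rightarrow> (nat \<Rightarrow> real) measure \<Rightarrow> bool" where
  "subgaussian_Rd d \<sigma> P \<longleftrightarrow>
     (\<forall>i<d. integrable P (\<lambda>x. x i)) \<and>
     (\<forall>u. norm_Rd d u = 1 \<longrightarrow> (\<forall>l::real.
        integrable P (\<lambda>x. exp (l * (inner_Rd d u x - (\<integral>y. inner_Rd d u y \<partial>P)))) \<and>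
        (\<integral>x. exp (l * (inner_Rd d u x - (\<integral>y. inner_Rd d u y \<partial>P))) \<partial>P)
          \<le> exp (l\<^sup>2 * \<sigma>\<^sup>2 / 2)))"

definition mixture_measure :: "real \<Rightarrow> 'a measure \<Rightarrow> 'a measure \<Rightarrow> 'a measure" where
  "mixture_measure a P Q = measure_of (space P) (sets P)
     (\<lambda>A. ennreal a * emeasure P A + ennreal (1 - a) * emeasure Q A)"

text \<open>Jensen-Shannon divergence (natural logarithm):
  JS(P||Q) = 1/2 KL(P||M) + 1/2 KL(Q||M), M = (P+Q)/2.
  Note: library KL_divergence b M N is KL(N || M).\<close>
definition JS_divergence :: "'a measure \<Rightarrow> 'a measure \<Rightarrow> real" where
  "JS_divergence P Q =
     (let M = mixture_measure (1/2) P Q in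
      KL_divergence (exp 1) M P / 2 + KL_divergence (exp 1) M Q / 2)"

definition diff_entropy :: "'a measure \<Rightarrow> ('a \<Rightarrow> real) \<Rightarrow> real" where
  "diff_entropy M X = prob_space.entropy M (exp 1) lborel X"

end

theory Submission
  imports Defs
begin

lemma gibbs:
  fixes M N :: "'a measure" and g :: "'a \<Rightarrow> real"
  assumes sf: "sigma_finite_measure M" and N: "prob_space N"
    and ac: "absolutely_continuous M N" and sets: "sets N = sets M"
    and gm[measurable]: "g \<in> borel_measurable M" and gpos: "\<And>x. 0 < g x"
    and gint: "(\<integral>\<^sup>+x. ennreal (g x) \<partial>M) \<le> 1"
    and intg: "integrable N (\<lambda>x. ln (g x))"
    and inte: "integrable N (entropy_density (exp 1) M N)"
  shows "(\<integral>x. ln (g x) \<partial>N) \<le> KL_divergence (exp 1) M N"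
proof -
  interpret M: sigma_finite_measure M by fact
  interpret N: prob_space N by fact
  define f where "f = RN_deriv M N"
  define F where "F x = enn2real (f x)" for x
  have fm[measurable]: "f \<in> borel_measurable M" unfolding f_def by simp
  have Fm[measurable]: "F \<in> borel_measurable M" unfolding F_def by simp
  have Nd: "N = density M f" unfolding f_def using M.density_RN_deriv[OF ac sets] by simp
  have ed: "entropy_density (exp 1) M N x = ln (F x)" for x
    by (simp add: entropy_density_def F_def f_def log_def)
  have fin: "AE x in M. f x \<noteq> \<infinity>" unfolding f_def
    by (rule M.RN_deriv_finite[OF N.sigma_finite_measure ac sets])
  have fin': "AE x in N. f x \<noteq> \<infinity>"
    by (rule absolutely_continuous_AE[OF sets ac fin])
  have nz: "AE x in N. f x \<noteq> 0"
    by (subst Nd, subst AE_density) auto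
  have AEpos: "AE x in N. 0 < F x"
    using fin' nz by eventually_elim (auto simp: F_def enn2real_positive_iff less_top[symmetric] zero_less_iff_neq_zero)
  have pw: "f x * ennreal (g x / F x) \<le> ennreal (g x)" for x
  proof (cases "f x" rule: ennreal_cases)
    case (real r)
    show ?thesis
    proof (cases "r = 0")
      case True then show ?thesis using real by simp
    next
      case False
      then have "r > 0" using real by simp
      then show ?thesis using real gpos[of x]
        by (simp add: F_def ennreal_mult''[symmetric])
    qed
  next
    case top then show ?thesis by (simp add: F_def)
  qed
  have mN[measurable]: "(\<lambda>x. g x / F x) \<in> borel_measurable N"
    using sets by (simp add: measurable_cong_sets[OF sets refl])
  have nnb: "(\<integral>\<^sup>+x. ennreal (g x / F x) \<partial>N) \<le> 1"
  proof -
    have "(\<integral>\<^sup>+x. ennreal (g x / F x) \<partial>N) = (\<integral>\<^sup>+x. f x * ennreal (g x / F x) \<partial>M)"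
      by (subst Nd, subst nn_integral_density) auto
    also have "\<dots> \<le> (\<integral>\<^sup>+x. ennreal (g x) \<partial>M)"
      by (intro nn_integral_mono pw)
    finally show ?thesis using gint by simp
  qed
  have intr: "integrable N (\<lambda>x. g x / F x)"
  proof (rule integrableI_nonneg)
    have "0 \<le> g x / F x" for x using gpos[of x] by (simp add: F_def less_imp_le)
    then show "AE x in N. 0 \<le> g x / F x" by simp
    show "(\<integral>\<^sup>+x. ennreal (g x / F x) \<partial>N) < \<infinity>" using nnb by (simp add: order_le_less_trans)
  qed fact
  have "ennreal (\<integral>x. g x / F x \<partial>N) = (\<integral>\<^sup>+x. ennreal (g x / F x) \<partial>N)"
  proof (rule nn_integral_eq_integral[symmetric])
    have "0 \<le> g x / F x" for x using gpos[of x] by (simp add: F_def less_imp_le)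
    then show "AE x in N. 0 \<le> g x / F x" by simp
  qed fact
  then have ib: "(\<integral>x. g x / F x \<partial>N) \<le> 1" using nnb
    by (metis ennreal_le_1)
  have inF: "integrable N (\<lambda>x. ln (F x))" using inte by (simp add: ed[abs_def])
  have "(\<integral>x. ln (g x) \<partial>N) - KL_divergence (exp 1) M N = (\<integral>x. ln (g x) - ln (F x) \<partial>N)"
    unfolding KL_divergence_def ed using intg inF by simp
  also have "\<dots> \<le> (\<integral>x. g x / F x - 1 \<partial>N)"
  proof (rule integral_mono_AE)
    show "integrable N (\<lambda>x. ln (g x) - ln (F x))" using intg inF by simp
    show "integrable N (\<lambda>x. g x / F x - 1)" using intr by simp
    show "AE x in N. ln (g x) - ln (F x) \<le> g x / F x - 1"
      using AEpos
    proof eventually_elim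
      case (elim x)
      have "ln (g x / F x) \<le> g x / F x - 1"
        using gpos[of x] elim by (intro ln_le_minus_one) auto
      then show ?case using gpos[of x] elim by (simp add: ln_div)
    qed
  qed
  also have "\<dots> = (\<integral>x. g x / F x \<partial>N) - 1"
    using intr by (simp add: N.prob_space)
  also have "\<dots> \<le> 0" using ib by simp
  finally show ?thesis by simp
qed

lemma KL_nonneg_gen:
  assumes M: "prob_space M" and N: "prob_space N"
    and ac: "absolutely_continuous M N" and sets: "sets N = sets M"
  shows "0 \<le> KL_divergence (exp 1) M N"
proof (cases "integrable N (entropy_density (exp 1) M N)")
  case True
  interpret M: prob_space M by fact
  have "(\<integral>x. ln ((\<lambda>_. 1::real) x) \<partial>N) \<le> KL_divergence (exp 1) M N"
    by (rule gibbs[OF M.sigma_finite_measure N ac sets]) (auto simp: True M.emeasure_space_1)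
  then show ?thesis by simp
next
  case False
  then show ?thesis by (simp add: KL_divergence_def not_integrable_integral_eq)
qed

lemma mixture_half:
  assumes P: "prob_space P" and Q: "prob_space Q" and sQ: "sets Q = sets P"
  defines "R \<equiv> mixture_measure (1/2) P Q"
  shows "sets R = sets P" "prob_space R" "absolutely_continuous R P" "absolutely_continuous R Q"
proof -
  interpret P: prob_space P by fact
  interpret Q: prob_space Q by fact
  have spQ: "space Q = space P" using sets_eq_imp_space_eq[OF sQ] .
  define \<mu> where "\<mu> A = ennreal (1/2) * emeasure P A + ennreal (1/2) * emeasure Q A" for A
  have R: "R = measure_of (space P) (sets P) \<mu>"
    unfolding R_def mixture_measure_def \<mu>_def by simp
  show sR: "sets R = sets P" unfolding R by (simp add: sets_measure_of sets.space_closed)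
  have ca: "countably_additive (sets P) \<mu>"
    unfolding countably_additive_def
  proof safe
    fix A :: "nat \<Rightarrow> _" assume A: "range A \<subseteq> sets P" "disjoint_family A"
    then have A': "range A \<subseteq> sets Q" using sQ by simp
    have "(\<Sum>i. \<mu> (A i)) = (\<Sum>i. ennreal (1/2) * emeasure P (A i)) + (\<Sum>i. ennreal (1/2) * emeasure Q (A i))"
      unfolding \<mu>_def by (rule suminf_add[symmetric]) auto
    also have "\<dots> = \<mu> (\<Union>i. A i)"
      unfolding \<mu>_def ennreal_suminf_cmult suminf_emeasure[OF A] suminf_emeasure[OF A' A(2)] ..
    finally show "(\<Sum>i. \<mu> (A i)) = \<mu> (\<Union>i. A i)" .
  qed
  have pos: "positive (sets P) \<mu>" unfolding positive_def \<mu>_def by simp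
  have em: "emeasure R A = \<mu> A" if "A \<in> sets P" for A
    unfolding R by (rule emeasure_measure_of_sigma[OF sets.sigma_algebra_axioms pos ca that])
  have spR: "space R = space P" using sets_eq_imp_space_eq[OF sR] .
  show "prob_space R"
  proof
    have "emeasure R (space P) = \<mu> (space P)" by (rule em) simp
    also have "\<dots> = ennreal (1/2) + ennreal (1/2)"
      unfolding \<mu>_def using P.emeasure_space_1 Q.emeasure_space_1 spQ by simp
    also have "\<dots> = ennreal (1/2 + 1/2)" by (rule ennreal_plus[symmetric]) auto
    also have "\<dots> = 1" by simp
    finally show "emeasure R (space R) = 1" unfolding spR .
  qed
  show "absolutely_continuous R P"
    unfolding absolutely_continuous_def
  proof
    fix A assume "A \<in> null_sets R"
    then have "A \<in> sets P" "\<mu> A = 0" using sR em by (auto simp: null_sets_def)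
    then show "A \<in> null_sets P" by (auto simp: \<mu>_def null_sets_def)
  qed
  show "absolutely_continuous R Q"
    unfolding absolutely_continuous_def
  proof
    fix A assume "A \<in> null_sets R"
    then have "A \<in> sets P" "\<mu> A = 0" using sR em by (auto simp: null_sets_def)
    then show "A \<in> null_sets Q" by (auto simp: \<mu>_def null_sets_def sQ)
  qed
qed

lemma JS_nonneg:
  assumes P: "prob_space P" and Q: "prob_space Q" and sQ: "sets Q = sets P"
  shows "0 \<le> JS_divergence P Q"
proof -
  note m = mixture_half[OF P Q sQ]
  have "0 \<le> KL_divergence (exp 1) (mixture_measure (1/2) P Q) P"
    by (rule KL_nonneg_gen[OF m(2) P m(3)]) (simp add: m(1))
  moreover have "0 \<le> KL_divergence (exp 1) (mixture_measure (1/2) P Q) Q"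
    by (rule KL_nonneg_gen[OF m(2) Q m(4)]) (simp add: m(1) sQ)
  ultimately show ?thesis unfolding JS_divergence_def Let_def by simp
qed


lemma inner_Rd_measurable[measurable]: "inner_Rd d v \<in> borel_measurable (lebesgue_Rd d)"
  unfolding inner_Rd_def by measurable

lemma proj_null:
  fixes v :: "nat \<Rightarrow> real"
  assumes j: "j < d" "v j \<noteq> 0" and N: "N \<in> null_sets lborel"
  shows "emeasure (lebesgue_Rd d) {x \<in> space (lebesgue_Rd d). inner_Rd d v x \<in> N} = 0"
proof -
  interpret product_sigma_finite "\<lambda>_::nat. lborel::real measure" by standard
  define I where "I = {..<d} - {j}"
  have dI: "{..<d} = insert j I" "finite I" "j \<notin> I" using j unfolding I_def by auto
  have Nm[measurable]: "N \<in> sets borel" using N by (auto simp: null_sets_def)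
  define A where "A = {x \<in> space (lebesgue_Rd d). inner_Rd d v x \<in> N}"
  have Am: "A \<in> sets (lebesgue_Rd d)"
  proof -
    have e: "A = inner_Rd d v -` N \<inter> space (lebesgue_Rd d)" unfolding A_def by blast
    show ?thesis unfolding e by (rule measurable_sets[OF inner_Rd_measurable Nm])
  qed
  have Am': "A \<in> sets (Pi\<^sub>M (insert j I) (\<lambda>_. lborel))" using Am dI by simp
  have ind: "indicator A (x(j := y)) = (indicator N (y * v j + (\<Sum>i\<in>I. v i * x i)) :: ennreal)"
    if "x \<in> space (Pi\<^sub>M I (\<lambda>_. lborel))" for x y
  proof -
    have "x(j := y) \<in> space (lebesgue_Rd d)" using that dI by (auto simp: space_PiM PiE_def extensional_def)
    moreover have "inner_Rd d v (x(j := y)) = y * v j + (\<Sum>i\<in>I. v i * x i)"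
    proof -
      have "inner_Rd d v (x(j := y)) = (\<Sum>i\<in>insert j I. v i * (x(j := y)) i)"
        unfolding inner_Rd_def dI(1) ..
      also have "\<dots> = v j * y + (\<Sum>i\<in>I. v i * (x(j := y)) i)"
        using dI(2,3) by simp
      also have "(\<Sum>i\<in>I. v i * (x(j := y)) i) = (\<Sum>i\<in>I. v i * x i)"
        using dI(3) by (intro sum.cong) auto
      finally show ?thesis by (simp only: mult.commute)
    qed
    ultimately show ?thesis unfolding A_def by (simp add: indicator_def)
  qed
  have zero: "(\<integral>\<^sup>+y. indicator N (y * v j + c) \<partial>lborel) = (0::ennreal)" for c
  proof -
    have "(0::ennreal) = (\<integral>\<^sup>+y. indicator N y \<partial>lborel)" using N by (simp add: null_sets_def)
    also have "\<dots> = ennreal \<bar>v j\<bar> * (\<integral>\<^sup>+y. indicator N (c + v j * y) \<partial>lborel)"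
      by (rule nn_integral_real_affine) (auto simp: j)
    finally show ?thesis using j by (simp add: ac_simps)
  qed
  have "emeasure (lebesgue_Rd d) A = (\<integral>\<^sup>+x. indicator A x \<partial>Pi\<^sub>M (insert j I) (\<lambda>_. lborel))"
    using Am dI by simp
  also have "\<dots> = (\<integral>\<^sup>+x. (\<integral>\<^sup>+y. indicator A (x(j := y)) \<partial>lborel) \<partial>Pi\<^sub>M I (\<lambda>_. lborel))"
    by (rule product_nn_integral_insert) (use dI Am' in auto)
  also have "\<dots> = (\<integral>\<^sup>+x. 0 \<partial>Pi\<^sub>M I (\<lambda>_. lborel :: real measure))"
  proof (rule Nonnegative_Lebesgue_Integration.nn_integral_cong)
    fix x assume x: "x \<in> space (Pi\<^sub>M I (\<lambda>_. lborel :: real measure))"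
    have "(\<integral>\<^sup>+y. indicator A (x(j := y)) \<partial>(lborel :: real measure)) = (\<integral>\<^sup>+y. indicator N (y * v j + (\<Sum>i\<in>I. v i * x i)) \<partial>(lborel :: real measure))"
      by (rule nn_integral_cong) (rule ind[OF x])
    also have "\<dots> = 0" by (rule zero)
    finally show "(\<integral>\<^sup>+y. indicator A (x(j := y)) \<partial>(lborel :: real measure)) = 0" .
  qed
  finally show ?thesis unfolding A_def by simp
qed


lemma density_nonneg_AE:
  assumes "is_density_Rd d p" shows "AE x in lebesgue_Rd d. 0 \<le> p x"
  using assms unfolding is_density_Rd_def by auto

lemma law_prob:
  assumes p: "is_density_Rd d p" shows "prob_space (law_Rd d p)"
proof
  have m[measurable]: "p \<in> borel_measurable (lebesgue_Rd d)" and i: "integrable (lebesgue_Rd d) p"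
    and one: "(\<integral>x. p x \<partial>lebesgue_Rd d) = 1" using p unfolding is_density_Rd_def by auto
  have sp: "space (law_Rd d p) = space (lebesgue_Rd d)" unfolding law_Rd_def by (rule space_density)
  have "emeasure (law_Rd d p) (space (law_Rd d p)) = (\<integral>\<^sup>+x. ennreal (p x) * indicator (space (lebesgue_Rd d)) x \<partial>lebesgue_Rd d)"
    unfolding sp unfolding law_Rd_def by (rule emeasure_density) auto
  also have "\<dots> = (\<integral>\<^sup>+x. ennreal (p x) \<partial>lebesgue_Rd d)"
    by (rule nn_integral_cong) (simp only: indicator_simps mult_1_right)
  also have "\<dots> = ennreal (\<integral>x. p x \<partial>lebesgue_Rd d)"
    by (rule nn_integral_eq_integral[OF i density_nonneg_AE[OF p]])
  finally show "emeasure (law_Rd d p) (space (law_Rd d p)) = 1" using one by simp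
qed

lemma unit_nonzero:
  assumes "norm_Rd d v = 1" shows "\<exists>j<d. v j \<noteq> 0"
proof (rule ccontr)
  assume "\<not> ?thesis"
  then have "(\<Sum>i<d. (v i)\<^sup>2) = 0" by simp
  then show False using assms by (simp add: norm_Rd_def)
qed

lemma proj_ac:
  assumes p: "is_density_Rd d p" and v: "norm_Rd d v = 1"
  shows "absolutely_continuous lborel (distr (law_Rd d p) lborel (inner_Rd d v))"
  unfolding absolutely_continuous_def
proof
  fix N :: "real set" assume N: "N \<in> null_sets lborel"
  obtain j where j: "j < d" "v j \<noteq> 0" using unit_nonzero[OF v] by auto
  have m[measurable]: "p \<in> borel_measurable (lebesgue_Rd d)" using p unfolding is_density_Rd_def by auto
  have Nm[measurable]: "N \<in> sets borel" using N by (auto simp: null_sets_def)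
  define S where "S = {x \<in> space (lebesgue_Rd d). inner_Rd d v x \<in> N}"
  have Sm: "S \<in> sets (lebesgue_Rd d)" unfolding S_def by measurable
  have Snull: "S \<in> null_sets (lebesgue_Rd d)"
    using proj_null[of j d v N, OF j N] Sm unfolding S_def by (simp add: null_sets_def)
  have "emeasure (distr (law_Rd d p) lborel (inner_Rd d v)) N = emeasure (law_Rd d p) S"
  proof -
    have sp: "space (law_Rd d p) = space (lebesgue_Rd d)" unfolding law_Rd_def by (rule space_density)
    have e: "inner_Rd d v -` N \<inter> space (law_Rd d p) = S" unfolding S_def sp by blast
    have "emeasure (distr (law_Rd d p) lborel (inner_Rd d v)) N = emeasure (law_Rd d p) (inner_Rd d v -` N \<inter> space (law_Rd d p))"
      by (rule emeasure_distr) (auto simp: law_Rd_def)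
    then show ?thesis unfolding e .
  qed
  also have "\<dots> = (\<integral>\<^sup>+x. ennreal (p x) * indicator S x \<partial>lebesgue_Rd d)"
    unfolding law_Rd_def by (rule emeasure_density) (auto simp: Sm)
  also have "\<dots> = 0" by (rule nn_integral_null_set[OF Snull])
  finally have "emeasure (distr (law_Rd d p) lborel (inner_Rd d v)) N = 0" .
  then show "N \<in> null_sets (distr (law_Rd d p) lborel (inner_Rd d v))"
    by (rule null_setsI) simp
qed

lemma meas_law[measurable]: "inner_Rd d v \<in> measurable (law_Rd d p) lborel"
  unfolding law_Rd_def by (subst measurable_cong_sets[OF sets_density refl]) simp

lemma meas_law'[measurable]: "inner_Rd d v \<in> borel_measurable (law_Rd d p)"
  unfolding law_Rd_def by (subst measurable_cong_sets[OF sets_density refl]) simp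

lemma law_int_iff:
  assumes p: "is_density_Rd d p" and h[measurable]: "h \<in> borel_measurable borel"
  shows "integrable (distr (law_Rd d p) lborel (inner_Rd d v)) h \<longleftrightarrow>
    integrable (lebesgue_Rd d) (\<lambda>x. p x * h (inner_Rd d v x))"
    and "integral\<^sup>L (distr (law_Rd d p) lborel (inner_Rd d v)) h =
    (\<integral>x. p x * h (inner_Rd d v x) \<partial>lebesgue_Rd d)"
proof -
  have m[measurable]: "p \<in> borel_measurable (lebesgue_Rd d)" using p unfolding is_density_Rd_def by auto
  have "integrable (distr (law_Rd d p) lborel (inner_Rd d v)) h \<longleftrightarrow> integrable (law_Rd d p) (\<lambda>x. h (inner_Rd d v x))"
    by (rule integrable_distr_eq) auto
  also have "\<dots> \<longleftrightarrow> integrable (lebesgue_Rd d) (\<lambda>x. p x *\<^sub>R h (inner_Rd d v x))"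
    unfolding law_Rd_def by (rule integrable_density) (auto simp: density_nonneg_AE[OF p])
  finally show "integrable (distr (law_Rd d p) lborel (inner_Rd d v)) h \<longleftrightarrow>
    integrable (lebesgue_Rd d) (\<lambda>x. p x * h (inner_Rd d v x))" by simp
  have "integral\<^sup>L (distr (law_Rd d p) lborel (inner_Rd d v)) h = integral\<^sup>L (law_Rd d p) (\<lambda>x. h (inner_Rd d v x))"
    by (rule integral_distr) auto
  also have "\<dots> = (\<integral>x. p x *\<^sub>R h (inner_Rd d v x) \<partial>lebesgue_Rd d)"
    unfolding law_Rd_def by (rule integral_density) (auto simp: density_nonneg_AE[OF p])
  finally show "integral\<^sup>L (distr (law_Rd d p) lborel (inner_Rd d v)) h =
    (\<integral>x. p x * h (inner_Rd d v x) \<partial>lebesgue_Rd d)" by simp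
qed

lemma mix_density:
  assumes p1: "is_density_Rd d p1" and p2: "is_density_Rd d p2" and a: "0 \<le> a" "a \<le> 1"
  shows "is_density_Rd d (\<lambda>x. a * p1 x + (1 - a) * p2 x)"
proof -
  have m1[measurable]: "p1 \<in> borel_measurable (lebesgue_Rd d)" and i1: "integrable (lebesgue_Rd d) p1"
    and o1: "(\<integral>x. p1 x \<partial>lebesgue_Rd d) = 1" and n1: "\<forall>x\<in>space (lebesgue_Rd d). 0 \<le> p1 x"
    using p1 unfolding is_density_Rd_def by auto
  have m2[measurable]: "p2 \<in> borel_measurable (lebesgue_Rd d)" and i2: "integrable (lebesgue_Rd d) p2"
    and o2: "(\<integral>x. p2 x \<partial>lebesgue_Rd d) = 1" and n2: "\<forall>x\<in>space (lebesgue_Rd d). 0 \<le> p2 x"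
    using p2 unfolding is_density_Rd_def by auto
  have "(\<integral>x. a * p1 x + (1 - a) * p2 x \<partial>lebesgue_Rd d) = a * (\<integral>x. p1 x \<partial>lebesgue_Rd d) + (1 - a) * (\<integral>x. p2 x \<partial>lebesgue_Rd d)"
    using i1 i2 by simp
  then show ?thesis unfolding is_density_Rd_def using i1 i2 o1 o2 n1 n2 a by simp
qed

lemma mix_int:
  assumes p1: "is_density_Rd d p1" and p2: "is_density_Rd d p2" and a: "0 \<le> a" "a \<le> 1"
    and h[measurable]: "h \<in> borel_measurable borel"
    and i1: "integrable (distr (law_Rd d p1) lborel (inner_Rd d v)) h"
    and i2: "integrable (distr (law_Rd d p2) lborel (inner_Rd d v)) h"
  shows "integrable (distr (law_Rd d (\<lambda>x. a * p1 x + (1 - a) * p2 x)) lborel (inner_Rd d v)) h"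
    and "integral\<^sup>L (distr (law_Rd d (\<lambda>x. a * p1 x + (1 - a) * p2 x)) lborel (inner_Rd d v)) h =
      a * integral\<^sup>L (distr (law_Rd d p1) lborel (inner_Rd d v)) h + (1 - a) * integral\<^sup>L (distr (law_Rd d p2) lborel (inner_Rd d v)) h"
proof -
  note pm = mix_density[OF p1 p2 a]
  have j1: "integrable (lebesgue_Rd d) (\<lambda>x. p1 x * h (inner_Rd d v x))" using i1 law_int_iff(1)[OF p1 h] by simp
  have j2: "integrable (lebesgue_Rd d) (\<lambda>x. p2 x * h (inner_Rd d v x))" using i2 law_int_iff(1)[OF p2 h] by simp
  have eq: "(\<lambda>x. (a * p1 x + (1 - a) * p2 x) * h (inner_Rd d v x)) = (\<lambda>x. a * (p1 x * h (inner_Rd d v x)) + (1 - a) * (p2 x * h (inner_Rd d v x)))"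
    by (auto simp: algebra_simps)
  have j: "integrable (lebesgue_Rd d) (\<lambda>x. (a * p1 x + (1 - a) * p2 x) * h (inner_Rd d v x))"
    unfolding eq using j1 j2 by simp
  then show "integrable (distr (law_Rd d (\<lambda>x. a * p1 x + (1 - a) * p2 x)) lborel (inner_Rd d v)) h"
    using law_int_iff(1)[OF pm h] by simp
  show "integral\<^sup>L (distr (law_Rd d (\<lambda>x. a * p1 x + (1 - a) * p2 x)) lborel (inner_Rd d v)) h =
      a * integral\<^sup>L (distr (law_Rd d p1) lborel (inner_Rd d v)) h + (1 - a) * integral\<^sup>L (distr (law_Rd d p2) lborel (inner_Rd d v)) h"
    unfolding law_int_iff(2)[OF pm h] law_int_iff(2)[OF p1 h] law_int_iff(2)[OF p2 h] eq
    using j1 j2 by simp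
qed

lemma sq_le_exp: "(t::real)\<^sup>2 \<le> 2 * (exp t + exp (- t))"
proof -
  have k: "s\<^sup>2 \<le> 2 * exp s" if "0 \<le> s" for s :: real
    using exp_lower_Taylor_quadratic[OF that] that by simp
  show ?thesis
  proof (cases "0 \<le> t")
    case True
    then show ?thesis using k[of t] by (smt (verit) exp_gt_zero)
  next
    case False
    then show ?thesis using k[of "-t"] by (smt (verit) exp_gt_zero power2_minus)
  qed
qed

lemma moment:
  assumes p: "is_density_Rd d p" and sg: "subgaussian_Rd d \<sigma> (law_Rd d p)" and s: "\<sigma> > 0"
    and v: "norm_Rd d v = 1"
  defines "\<mu> \<equiv> \<integral>y. inner_Rd d v y \<partial>law_Rd d p"
  shows "integrable (distr (law_Rd d p) lborel (inner_Rd d v)) (\<lambda>y. (y - \<mu>)\<^sup>2)"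
    and "(\<integral>y. (y - \<mu>)\<^sup>2 \<partial>distr (law_Rd d p) lborel (inner_Rd d v)) \<le> 4 * exp (1/2) * \<sigma>\<^sup>2"
proof -
  let ?P = "law_Rd d p"
  let ?T = "inner_Rd d v"
  have sgv: "\<And>l. integrable ?P (\<lambda>x. exp (l * (?T x - \<mu>))) \<and> (\<integral>x. exp (l * (?T x - \<mu>)) \<partial>?P) \<le> exp (l\<^sup>2 * \<sigma>\<^sup>2 / 2)"
    using sg v unfolding subgaussian_Rd_def \<mu>_def by blast
  define Ep where "Ep x = exp ((1/\<sigma>) * (?T x - \<mu>))" for x
  define Em where "Em x = exp ((-1/\<sigma>) * (?T x - \<mu>))" for x
  have iEp: "integrable ?P Ep" and iEm: "integrable ?P Em"
    using sgv[of "1/\<sigma>"] sgv[of "-1/\<sigma>"] unfolding Ep_def Em_def by auto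
  have bEp: "(\<integral>x. Ep x \<partial>?P) \<le> exp (1/2)"
    using sgv[of "1/\<sigma>"] s unfolding Ep_def by (simp add: power2_eq_square)
  have bEm: "(\<integral>x. Em x \<partial>?P) \<le> exp (1/2)"
    using sgv[of "-1/\<sigma>"] s unfolding Em_def by (simp add: power2_eq_square)
  have pw: "(?T x - \<mu>)\<^sup>2 \<le> 2 * \<sigma>\<^sup>2 * (Ep x + Em x)" for x
  proof -
    define t where "t = (?T x - \<mu>) / \<sigma>"
    have "(?T x - \<mu>)\<^sup>2 = \<sigma>\<^sup>2 * t\<^sup>2" unfolding t_def using s by (simp add: power_divide)
    also have "\<dots> \<le> \<sigma>\<^sup>2 * (2 * (exp t + exp (- t)))" by (intro mult_left_mono sq_le_exp) auto
    also have "exp t = Ep x" unfolding Ep_def t_def by simp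
    also have "exp (- t) = Em x" unfolding Em_def t_def by simp
    finally show ?thesis by (simp add: algebra_simps)
  qed
  have iB: "integrable ?P (\<lambda>x. 2 * \<sigma>\<^sup>2 * (Ep x + Em x))" using iEp iEm by simp
  have iS: "integrable ?P (\<lambda>x. (?T x - \<mu>)\<^sup>2)"
  proof (rule Bochner_Integration.integrable_bound[OF iB])
    show "(\<lambda>x. (?T x - \<mu>)\<^sup>2) \<in> borel_measurable ?P" by measurable
    have "0 \<le> Ep x" "0 \<le> Em x" for x unfolding Ep_def Em_def by auto
    then show "AE x in ?P. norm ((?T x - \<mu>)\<^sup>2) \<le> norm (2 * \<sigma>\<^sup>2 * (Ep x + Em x))"
      using pw by (auto intro!: AE_I2 simp: abs_of_nonneg add_nonneg_nonneg)
  qed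
  have "(\<integral>x. (?T x - \<mu>)\<^sup>2 \<partial>?P) \<le> (\<integral>x. 2 * \<sigma>\<^sup>2 * (Ep x + Em x) \<partial>?P)"
    by (rule integral_mono[OF iS iB pw])
  also have "\<dots> = 2 * \<sigma>\<^sup>2 * ((\<integral>x. Ep x \<partial>?P) + (\<integral>x. Em x \<partial>?P))"
    using iEp iEm by simp
  also have "\<dots> \<le> 2 * \<sigma>\<^sup>2 * (exp (1/2) + exp (1/2))"
    using bEp bEm by (intro mult_left_mono add_mono) auto
  finally have b: "(\<integral>x. (?T x - \<mu>)\<^sup>2 \<partial>?P) \<le> 4 * exp (1/2) * \<sigma>\<^sup>2" by (simp add: algebra_simps)
  show "integrable (distr ?P lborel ?T) (\<lambda>y. (y - \<mu>)\<^sup>2)"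
    using iS by (subst integrable_distr_eq) auto
  show "(\<integral>y. (y - \<mu>)\<^sup>2 \<partial>distr ?P lborel ?T) \<le> 4 * exp (1/2) * \<sigma>\<^sup>2"
    using b by (subst integral_distr) auto
qed

lemma sq_shift_int:
  fixes M :: "real measure"
  assumes M: "prob_space M" and i: "integrable M (\<lambda>y. (y - m)\<^sup>2)" and sM: "sets M = sets borel"
  shows "integrable M (\<lambda>y. (y - c)\<^sup>2)"
proof -
  interpret prob_space M by fact
  have iB: "integrable M (\<lambda>y. 2 * (y - m)\<^sup>2 + 2 * (m - c)\<^sup>2)" using i by simp
  show ?thesis
  proof (rule Bochner_Integration.integrable_bound[OF iB])
    show "(\<lambda>y. (y - c)\<^sup>2) \<in> borel_measurable M" using sM by (simp add: measurable_cong_sets[OF sM refl])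
    have "(y - c)\<^sup>2 \<le> 2 * (y - m)\<^sup>2 + 2 * (m - c)\<^sup>2" for y
      by (smt (verit) power2_diff power2_sum sum_squares_bound zero_le_power2)
    then show "AE x in M. norm ((x - c)\<^sup>2) \<le> norm (2 * (x - m)\<^sup>2 + 2 * (m - c)\<^sup>2)"
      by (auto intro!: AE_I2)
  qed
qed


lemma gauss:
  fixes \<sigma> m1 m2 :: real
  assumes s: "\<sigma> > 0"
  defines "g \<equiv> \<lambda>y. normal_density m1 \<sigma> y / 2 + normal_density m2 \<sigma> y / 2"
  defines "c \<equiv> sqrt (2 * pi * \<sigma>\<^sup>2)"
  shows "0 < g y" and "g \<in> borel_measurable borel"
    and "(\<integral>\<^sup>+y. ennreal (g y) \<partial>lborel) \<le> 1"
    and "ln (g y) \<le> - ln c"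
    and "- ln 2 - ln c - (y - m1)\<^sup>2 / (2 * \<sigma>\<^sup>2) \<le> ln (g y)"
    and "- ln 2 - ln c - (y - m2)\<^sup>2 / (2 * \<sigma>\<^sup>2) \<le> ln (g y)"
    and "ln c = ln (2 * pi) / 2 + ln \<sigma>"
proof -
  have cpos: "c > 0" unfolding c_def using s by simp
  have nd: "normal_density m \<sigma> y = exp (- (y - m)\<^sup>2 / (2 * \<sigma>\<^sup>2)) / c" for m
    unfolding normal_density_def c_def by simp
  have ndpos: "0 < normal_density m \<sigma> y" for m using normal_density_pos[OF s] .
  show gpos: "0 < g y" unfolding g_def using ndpos[of m1] ndpos[of m2] by simp
  show "g \<in> borel_measurable borel" unfolding g_def by measurable
  have ig: "integrable lborel g" unfolding g_def using s by (intro Bochner_Integration.integrable_add integrable_divide_zero integrable_normal_density) auto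
  have "(\<integral>\<^sup>+y. ennreal (g y) \<partial>lborel) = ennreal (\<integral>y. g y \<partial>lborel)"
    by (rule nn_integral_eq_integral[OF ig]) (auto simp: g_def)
  also have "(\<integral>y. g y \<partial>lborel) = 1" unfolding g_def using s by (simp add: integrable_normal_density)
  finally show "(\<integral>\<^sup>+y. ennreal (g y) \<partial>lborel) \<le> 1" by simp
  have ndle: "normal_density m \<sigma> y \<le> 1 / c" for m
    unfolding nd using cpos by (simp add: divide_right_mono)
  have "g y \<le> 1 / c" unfolding g_def using ndle[of m1] ndle[of m2] by simp
  then have "ln (g y) \<le> ln (1 / c)" using gpos cpos by simp
  then show "ln (g y) \<le> - ln c" using cpos by (simp add: ln_div)
  have lnd: "ln (normal_density m \<sigma> y / 2) = - ln 2 - ln c - (y - m)\<^sup>2 / (2 * \<sigma>\<^sup>2)" for m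
    unfolding nd using cpos by (simp add: ln_div ln_mult)
  show "- ln 2 - ln c - (y - m1)\<^sup>2 / (2 * \<sigma>\<^sup>2) \<le> ln (g y)"
    unfolding lnd[symmetric] using ndpos[of m1] ndpos[of m2] unfolding g_def by simp
  show "- ln 2 - ln c - (y - m2)\<^sup>2 / (2 * \<sigma>\<^sup>2) \<le> ln (g y)"
    unfolding lnd[symmetric] using ndpos[of m1] ndpos[of m2] unfolding g_def by simp
  show "ln c = ln (2 * pi) / 2 + ln \<sigma>"
    unfolding c_def using s by (simp add: ln_sqrt ln_mult ln_realpow)
qed

lemma lower_aux:
  fixes R :: "real measure"
  assumes R: "prob_space R" and i: "integrable R (\<lambda>y. (y - m)\<^sup>2)"
    and b: "(\<integral>y. (y - m)\<^sup>2 \<partial>R) \<le> 4 * exp (1/2) * \<sigma>\<^sup>2" and s: "\<sigma> > 0"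
    and h: "\<And>y. A - (y - m)\<^sup>2 / (2 * \<sigma>\<^sup>2) \<le> h y" and ih: "integrable R h"
  shows "A - 2 * exp (1/2) \<le> (\<integral>y. h y \<partial>R)"
proof -
  interpret prob_space R by fact
  have il: "integrable R (\<lambda>y. A - (y - m)\<^sup>2 / (2 * \<sigma>\<^sup>2))" using i by simp
  have "(\<integral>y. A - (y - m)\<^sup>2 / (2 * \<sigma>\<^sup>2) \<partial>R) = A - (\<integral>y. (y - m)\<^sup>2 \<partial>R) / (2 * \<sigma>\<^sup>2)"
    using i by (simp add: prob_space)
  also have "\<dots> \<ge> A - (4 * exp (1/2) * \<sigma>\<^sup>2) / (2 * \<sigma>\<^sup>2)"
  proof -
    have "(\<integral>y. (y - m)\<^sup>2 \<partial>R) / (2 * \<sigma>\<^sup>2) \<le> (4 * exp (1/2) * \<sigma>\<^sup>2) / (2 * \<sigma>\<^sup>2)"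
      using b s by (intro divide_right_mono) auto
    then show ?thesis by linarith
  qed
  also have "(4 * exp (1/2) * \<sigma>\<^sup>2) / (2 * \<sigma>\<^sup>2) = 2 * exp (1/2)" using s by simp
  finally have "A - 2 * exp (1/2) \<le> (\<integral>y. A - (y - m)\<^sup>2 / (2 * \<sigma>\<^sup>2) \<partial>R)" .
  also have "\<dots> \<le> (\<integral>y. h y \<partial>R)" by (rule integral_mono[OF il ih h])
  finally show ?thesis .
qed

lemma main_bound:
  assumes s: "\<sigma> > 0" and a: "0 \<le> \<alpha>" "\<alpha> \<le> 1"
    and p1: "is_density_Rd d p1" and p2: "is_density_Rd d p2"
    and sg1: "subgaussian_Rd d \<sigma> (law_Rd d p1)" and sg2: "subgaussian_Rd d \<sigma> (law_Rd d p2)"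
    and v: "norm_Rd d v = 1"
    and inte: "integrable (distr (law_Rd d (\<lambda>x. \<alpha> * p1 x + (1 - \<alpha>) * p2 x)) lborel (inner_Rd d v))
       (entropy_density (exp 1) lborel (distr (law_Rd d (\<lambda>x. \<alpha> * p1 x + (1 - \<alpha>) * p2 x)) lborel (inner_Rd d v)))"
  shows "diff_entropy (law_Rd d (\<lambda>x. \<alpha> * p1 x + (1 - \<alpha>) * p2 x)) (inner_Rd d v)
     \<le> ln \<sigma> + (ln 2 + ln (2 * pi) / 2 + 2 * exp (1/2))"
proof -
  define pm where "pm = (\<lambda>x. \<alpha> * p1 x + (1 - \<alpha>) * p2 x)"
  have pm: "is_density_Rd d pm" unfolding pm_def by (rule mix_density[OF p1 p2 a])
  define Q where "Q = distr (law_Rd d pm) lborel (inner_Rd d v)"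
  define Q1 where "Q1 = distr (law_Rd d p1) lborel (inner_Rd d v)"
  define Q2 where "Q2 = distr (law_Rd d p2) lborel (inner_Rd d v)"
  define m1 where "m1 = (\<integral>y. inner_Rd d v y \<partial>law_Rd d p1)"
  define m2 where "m2 = (\<integral>y. inner_Rd d v y \<partial>law_Rd d p2)"
  define g where "g = (\<lambda>y. normal_density m1 \<sigma> y / 2 + normal_density m2 \<sigma> y / 2)"
  define c where "c = sqrt (2 * pi * \<sigma>\<^sup>2)"
  have G1: "0 < g y" for y unfolding g_def by (rule gauss(1)[OF s])
  have gm[measurable]: "g \<in> borel_measurable borel" unfolding g_def by (rule gauss(2)[OF s])
  have G3: "(\<integral>\<^sup>+y. ennreal (g y) \<partial>lborel) \<le> 1" unfolding g_def by (rule gauss(3)[OF s])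
  have G4: "ln (g y) \<le> - ln c" for y unfolding g_def c_def by (rule gauss(4)[OF s])
  have G5: "- ln 2 - ln c - (y - m1)\<^sup>2 / (2 * \<sigma>\<^sup>2) \<le> ln (g y)" for y unfolding g_def c_def by (rule gauss(5)[OF s])
  have G6: "- ln 2 - ln c - (y - m2)\<^sup>2 / (2 * \<sigma>\<^sup>2) \<le> ln (g y)" for y unfolding g_def c_def by (rule gauss(6)[OF s])
  have G7: "ln c = ln (2 * pi) / 2 + ln \<sigma>" unfolding c_def by (rule gauss(7)[OF s])
  have lgm[measurable]: "(\<lambda>y. ln (g y)) \<in> borel_measurable borel" by measurable
  have PQ: "prob_space Q" unfolding Q_def using law_prob[OF pm] by (rule prob_space.prob_space_distr) simp
  have PQ1: "prob_space Q1" unfolding Q1_def using law_prob[OF p1] by (rule prob_space.prob_space_distr) simp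
  have PQ2: "prob_space Q2" unfolding Q2_def using law_prob[OF p2] by (rule prob_space.prob_space_distr) simp
  have M1: "integrable Q1 (\<lambda>y. (y - m1)\<^sup>2)" "(\<integral>y. (y - m1)\<^sup>2 \<partial>Q1) \<le> 4 * exp (1/2) * \<sigma>\<^sup>2"
    unfolding Q1_def m1_def using moment[OF p1 sg1 s v] by auto
  have M2: "integrable Q2 (\<lambda>y. (y - m2)\<^sup>2)" "(\<integral>y. (y - m2)\<^sup>2 \<partial>Q2) \<le> 4 * exp (1/2) * \<sigma>\<^sup>2"
    unfolding Q2_def m2_def using moment[OF p2 sg2 s v] by auto
  have M21: "integrable Q2 (\<lambda>y. (y - m1)\<^sup>2)"
    by (rule sq_shift_int[OF PQ2 M2(1)]) (simp add: Q2_def)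
  have bnd: "\<bar>ln (g y)\<bar> \<le> ln 2 + \<bar>ln c\<bar> + (y - m1)\<^sup>2 / (2 * \<sigma>\<^sup>2)" for y
    using G4[of y] G5[of y] by (smt (verit) ln_ge_zero)
  have intl: "integrable R (\<lambda>y. ln (g y))" if R: "integrable R (\<lambda>y. (y - m1)\<^sup>2)" "sets R = sets borel" "prob_space R" for R
  proof (rule Bochner_Integration.integrable_bound)
    interpret prob_space R by fact
    show "integrable R (\<lambda>y. ln 2 + \<bar>ln c\<bar> + (y - m1)\<^sup>2 / (2 * \<sigma>\<^sup>2))"
      using R(1) by simp
    show "(\<lambda>y. ln (g y)) \<in> borel_measurable R" using R(2) by (simp add: measurable_cong_sets[OF R(2) refl])
    show "AE x in R. norm (ln (g x)) \<le> norm (ln 2 + \<bar>ln c\<bar> + (x - m1)\<^sup>2 / (2 * \<sigma>\<^sup>2))"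
      using bnd by (auto intro!: AE_I2 order_trans[OF bnd])
  qed
  have sQ1: "sets Q1 = sets borel" unfolding Q1_def by simp
  have sQ2: "sets Q2 = sets borel" unfolding Q2_def by simp
  have iQ1: "integrable Q1 (\<lambda>y. ln (g y))" by (rule intl[OF M1(1) sQ1 PQ1])
  have iQ2: "integrable Q2 (\<lambda>y. ln (g y))" by (rule intl[OF M21 sQ2 PQ2])
  note mi = mix_int[OF p1 p2 a lgm iQ1[unfolded Q1_def] iQ2[unfolded Q2_def], folded pm_def Q_def Q1_def Q2_def]
  have L1: "- ln 2 - ln c - 2 * exp (1/2) \<le> (\<integral>y. ln (g y) \<partial>Q1)"
    by (rule lower_aux[OF PQ1 M1(1) M1(2) s G5 iQ1])
  have L2: "- ln 2 - ln c - 2 * exp (1/2) \<le> (\<integral>y. ln (g y) \<partial>Q2)"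
    by (rule lower_aux[OF PQ2 M2(1) M2(2) s G6 iQ2])
  have c1: "\<alpha> * (- ln 2 - ln c - 2 * exp (1/2)) \<le> \<alpha> * (\<integral>y. ln (g y) \<partial>Q1)"
    using mult_left_mono[OF L1 a(1)] .
  have c2: "(1 - \<alpha>) * (- ln 2 - ln c - 2 * exp (1/2)) \<le> (1 - \<alpha>) * (\<integral>y. ln (g y) \<partial>Q2)"
    using L2 a by (intro mult_left_mono) auto
  have LQ: "- ln 2 - ln c - 2 * exp (1/2) \<le> (\<integral>y. ln (g y) \<partial>Q)"
    unfolding mi(2) using c1 c2 by (simp add: algebra_simps)
  have sfl: "sigma_finite_measure (lborel :: real measure)" by (rule lborel.sigma_finite_measure_axioms)
  have acQ: "absolutely_continuous lborel Q" unfolding Q_def by (rule proj_ac[OF pm v])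
  have sQ: "sets Q = sets lborel" unfolding Q_def by simp
  have gib: "(\<integral>y. ln (g y) \<partial>Q) \<le> KL_divergence (exp 1) lborel Q"
    by (rule gibbs[OF sfl PQ acQ sQ _ G1 G3 mi(1)]) (use inte in \<open>simp_all add: Q_def pm_def\<close>)
  have ent: "diff_entropy (law_Rd d pm) (inner_Rd d v) = - KL_divergence (exp 1) lborel Q"
    unfolding diff_entropy_def prob_space.entropy_def[OF law_prob[OF pm]] Q_def ..
  show ?thesis
    using ent gib LQ G7 unfolding pm_def by linarith
qed

theorem mainTheorem5:
  "\<exists>C K::real. C > 0 \<and>
     (\<forall>(d::nat) (\<sigma>::real) (\<alpha>::real) (\<beta>::real) p1 p2 v.
        d \<ge> 1 \<longrightarrow> \<sigma> > 0 \<longrightarrow> 0 \<le> \<alpha> \<longrightarrow> \<alpha> \<le> 1 \<longrightarrow>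
        is_density_Rd d p1 \<longrightarrow> is_density_Rd d p2 \<longrightarrow>
        subgaussian_Rd d \<sigma> (law_Rd d p1) \<longrightarrow> subgaussian_Rd d \<sigma> (law_Rd d p2) \<longrightarrow>
        emeasure (lebesgue_Rd d)
          {x \<in> space (lebesgue_Rd d). p1 x > 0 \<and> p2 x > 0} > 0 \<longrightarrow>
        norm_Rd d v = 1 \<longrightarrow>
        JS_divergence (distr (law_Rd d p1) lborel (inner_Rd d v))
                      (distr (law_Rd d p2) lborel (inner_Rd d v)) \<le> \<beta> \<longrightarrow>
        (let p = (\<lambda>x. \<alpha> * p1 x + (1 - \<alpha>) * p2 x);
             Q = distr (law_Rd d p) lborel (inner_Rd d v) in
         integrable Q (entropy_density (exp 1) lborel Q) \<longrightarrow>
         diff_entropy (law_Rd d p) (inner_Rd d v) \<le> C * (ln \<sigma> + \<beta>) + K))"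
  apply (rule exI[of _ 1], rule exI[of _ "ln 2 + ln (2 * pi) / 2 + 2 * exp (1/2)"])
  apply (intro conjI allI impI)
   apply simp
  subgoal premises prems for d \<sigma> \<alpha> \<beta> p1 p2 v
    unfolding Let_def
  proof (intro impI)
    assume inte: "integrable (distr (law_Rd d (\<lambda>x. \<alpha> * p1 x + (1 - \<alpha>) * p2 x)) lborel (inner_Rd d v))
       (entropy_density (exp 1) lborel (distr (law_Rd d (\<lambda>x. \<alpha> * p1 x + (1 - \<alpha>) * p2 x)) lborel (inner_Rd d v)))"
    have mb: "diff_entropy (law_Rd d (\<lambda>x. \<alpha> * p1 x + (1 - \<alpha>) * p2 x)) (inner_Rd d v)
     \<le> ln \<sigma> + (ln 2 + ln (2 * pi) / 2 + 2 * exp (1/2))"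
      by (rule main_bound[OF prems(2,3,4,5,6,7,8,10) inte])
    have P1: "prob_space (distr (law_Rd d p1) lborel (inner_Rd d v))"
      using law_prob[OF prems(5)] by (rule prob_space.prob_space_distr) simp
    have P2: "prob_space (distr (law_Rd d p2) lborel (inner_Rd d v))"
      using law_prob[OF prems(6)] by (rule prob_space.prob_space_distr) simp
    have "0 \<le> JS_divergence (distr (law_Rd d p1) lborel (inner_Rd d v)) (distr (law_Rd d p2) lborel (inner_Rd d v))"
      by (rule JS_nonneg[OF P1 P2]) simp
    then have b0: "0 \<le> \<beta>" using prems(11) by (rule order_trans)
    have "ln \<sigma> + (ln 2 + ln (2 * pi) / 2 + 2 * exp (1/2)) \<le> 1 * (ln \<sigma> + \<beta>) + (ln 2 + ln (2 * pi) / 2 + 2 * exp (1/2))"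
      using b0 by simp
    with mb show "diff_entropy (law_Rd d (\<lambda>x. \<alpha> * p1 x + (1 - \<alpha>) * p2 x)) (inner_Rd d v)
      \<le> 1 * (ln \<sigma> + \<beta>) + (ln 2 + ln (2 * pi) / 2 + 2 * exp (1/2))"
      by (rule order_trans)
  qed
  done

end
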